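(* Let $\mathcal C=\mathcal C(I,A,(\rho_i)_{i\in I},(C^a)_{a\in A})$ be a connected Cartan scheme and $\mathcal R=\mathcal R(\mathcal C,(R^a)_{a\in A})$ a root system of type $\mathcal C$. Let $I'\subset I$, $I''=I\setminus I'$, and assume $I'\neq\emptyset\neq I''$. For $a\in A$ put $\hat R^a=(R^a\cap\sum_{i\in I'}\mathbb Z\alpha_i)\cup(R^a\cap\sum_{i\in I''}\mathbb Z\alpha_i)$. The following are equivalent: (1) there exists $a\in A$ with $c^a_{ij}=0$ for all $i\in I'$, $j\in I''$; (2) $c^a_{ij}=c^a_{ji}=0$ for all $a\in A$, $i\in I'$, $j\in I''$; (3) $\mathcal R(\mathcal C,(\hat R^a)_{a\in A})$ is a root system of type $\mathcal C$. If $\mathcal R$ is finite, then (1)–(3) are also equivalent to each of: (4) $\hat R^a=R^a$ for all $a\in A$; (5) $\mathcal R$ is the direct sum of its restrictions to $I'$ and $I''$, i.e. $R^a=(R^a\cap\sum_{i\in I'}\mathbb Z\alpha_i)\cup(R^a\cap\sum_{j\in I''}\mathbb Z\alpha_j)$ for all $a\in A$.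
   Context: Let $I$ be a nonempty finite set and $\{\alpha_i\mid i\in I\}$ the standard basis of $\mathbb Z^I$; $\mathbb N_0=\{0,1,2,\dots\}$. A generalized Cartan matrix is $C=(c_{ij})_{i,j\in I}\in\mathbb Z^{I\times I}$ with $c_{ii}=2$, $c_{jk}\le0$ for $j\ne k$, and $c_{ij}=0\Rightarrow c_{ji}=0$. A Cartan scheme $\mathcal C=\mathcal C(I,A,(\rho_i)_{i\in I},(C^a)_{a\in A})$ consists of a nonempty set $A$, maps $\rho_i:A\to A$ and generalized Cartan matrices $C^a=(c^a_{jk})_{j,k\in I}$ such that (C1) $\rho_i^2=\mathrm{id}$ and (C2) $c^a_{ij}=c^{\rho_i(a)}_{ij}$ for all $a\in A$, $i,j\in I$. It is connected if the group generated by the $\rho_i$ acts transitively on $A$. For $i\in I$, $a\in A$ let $\sigma_i^a\in\mathrm{Aut}(\mathbb Z^I)$, $\sigma_i^a(\alpha_j)=\alpha_j-c^a_{ij}\alpha_i$. A root system of type $\mathcal C$ is a family $\mathcal R=\mathcal R(\mathcal C,(R^a)_{a\in A})$ of subsets $R^a\subset\mathbb Z^I$ such that, writing $R^a_+=R^a\cap\mathbb N_0^I$ and $m^a_{i,j}=|R^a\cap(\mathbb N_0\alpha_i+\mathbb N_0\alpha_j)|$, for all $a\in A$, $i,j\in I$: (R1) $R^a=R^a_+\cup(-R^a_+)$; (R2) $R^a\cap\mathbb Z\alpha_i=\{\alpha_i,-\alpha_i\}$; (R3) $\sigma_i^a(R^a)=R^{\rho_i(a)}$; (R4) if $i\neq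 j$ and $m^a_{i,j}$ is finite then $(\rho_i\rho_j)^{m^a_{i,j}}(a)=a$. It is finite if every $R^a$ is finite. *)

theory Defs
  imports Main
begin

text \<open>Elements of Z^I are represented as functions 'i => int vanishing outside I.\<close>

definition zvec :: "'i set \<Rightarrow> ('i \<Rightarrow> int) set" where
  "zvec I = {v. \<forall>j. j \<notin> I \<longrightarrow> v j = 0}"

definition zspan :: "'i set \<Rightarrow> ('i \<Rightarrow> int) set" where
  "zspan J = {v. \<forall>j. j \<notin> J \<longrightarrow> v j = 0}"

definition alpha :: "'i \<Rightarrow> 'i \<Rightarrow> int" where
  "alpha i = (\<lambda>j. if j = i then 1 else 0)"

definition gen_cartan_matrix :: "'i set \<Rightarrow> ('i \<Rightarrow> 'i \<Rightarrow> int) \<Rightarrow> bool" where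
  "gen_cartan_matrix I M \<longleftrightarrow>
     (\<forall>i\<in>I. M i i = 2) \<and>
     (\<forall>j\<in>I. \<forall>k\<in>I. j \<noteq> k \<longrightarrow> M j k \<le> 0) \<and>
     (\<forall>i\<in>I. \<forall>j\<in>I. M i j = 0 \<longrightarrow> M j i = 0)"

definition cartan_scheme ::
  "'i set \<Rightarrow> 'a set \<Rightarrow> ('i \<Rightarrow> 'a \<Rightarrow> 'a) \<Rightarrow> ('a \<Rightarrow> 'i \<Rightarrow> 'i \<Rightarrow> int) \<Rightarrow> bool" where
  "cartan_scheme I A rho C \<longleftrightarrow>
     finite I \<and> I \<noteq> {} \<and> A \<noteq> {} \<and>
     (\<forall>i\<in>I. \<forall>a\<in>A. rho i a \<in> A \<and> rho i (rho i a) = a) \<and>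
     (\<forall>a\<in>A. gen_cartan_matrix I (C a)) \<and>
     (\<forall>a\<in>A. \<forall>i\<in>I. \<forall>j\<in>I. C a i j = C (rho i a) i j)"

text \<open>Connected: the group generated by the rho_i acts transitively on A.
  Since each rho_i is an involution on A, the group is generated as a monoid
  by the rho_i, so it suffices to use finite words.\<close>
definition connected_cs :: "'i set \<Rightarrow> 'a set \<Rightarrow> ('i \<Rightarrow> 'a \<Rightarrow> 'a) \<Rightarrow> bool" where
  "connected_cs I A rho \<longleftrightarrow>
     (\<forall>a\<in>A. \<forall>b\<in>A. \<exists>is. set is \<subseteq> I \<and> foldr rho is a = b)"

text \<open>sigma_i^a(v) = v - (sum_j c^a_ij v_j) alpha_i, the linear map with
  alpha_j |-> alpha_j - c^a_ij alpha_i.\<close>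
definition sigma :: "'i set \<Rightarrow> ('a \<Rightarrow> 'i \<Rightarrow> 'i \<Rightarrow> int) \<Rightarrow> 'a \<Rightarrow> 'i \<Rightarrow> ('i \<Rightarrow> int) \<Rightarrow> ('i \<Rightarrow> int)" where
  "sigma I C a i v = (\<lambda>k. v k - (if k = i then (\<Sum>j\<in>I. C a i j * v j) else 0))"

definition pos_roots :: "('i \<Rightarrow> int) set \<Rightarrow> ('i \<Rightarrow> int) set" where
  "pos_roots R = {v \<in> R. \<forall>j. v j \<ge> 0}"

definition cone2 :: "'i \<Rightarrow> 'i \<Rightarrow> ('i \<Rightarrow> int) set" where
  "cone2 i j = {v. \<exists>m n :: nat. v = (\<lambda>k. int m * alpha i k + int n * alpha j k)}"

definition root_system ::
  "'i set \<Rightarrow> 'a set \<Rightarrow> ('i \<Rightarrow> 'a \<Rightarrow> 'a) \<Rightarrow> ('a \<Rightarrow> 'i \<Rightarrow> 'i \<Rightarrow> int)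
     \<Rightarrow> ('a \<Rightarrow> ('i \<Rightarrow> int) set) \<Rightarrow> bool" where
  "root_system I A rho C R \<longleftrightarrow>
     cartan_scheme I A rho C \<and>
     (\<forall>a\<in>A. R a \<subseteq> zvec I) \<and>
     (\<forall>a\<in>A. R a = pos_roots (R a) \<union> uminus ` pos_roots (R a)) \<and>
     (\<forall>a\<in>A. \<forall>i\<in>I. R a \<inter> {v. \<exists>k::int. v = (\<lambda>j. k * alpha i j)} = {alpha i, - alpha i}) \<and>
     (\<forall>a\<in>A. \<forall>i\<in>I. sigma I C a i ` R a = R (rho i a)) \<and>
     (\<forall>a\<in>A. \<forall>i\<in>I. \<forall>j\<in>I. i \<noteq> j \<longrightarrow> finite (R a \<inter> cone2 i j) \<longrightarrow>
        ((rho i \<circ> rho j) ^^ card (R a \<inter> cone2 i j)) a = a)"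

definition finite_rs :: "'a set \<Rightarrow> ('a \<Rightarrow> ('i \<Rightarrow> int) set) \<Rightarrow> bool" where
  "finite_rs A R \<longleftrightarrow> (\<forall>a\<in>A. finite (R a))"

end

theory Submission
  imports Defs
begin

definition lin :: "(('i \<Rightarrow> int) \<Rightarrow> ('i \<Rightarrow> int)) \<Rightarrow> bool" where
  "lin f \<longleftrightarrow> (\<forall>x y. f (\<lambda>k. x k + y k) = (\<lambda>k. f x k + f y k)) \<and> (\<forall>c x. f (\<lambda>k. c * x k) = (\<lambda>k. c * f x k))"

inductive reach :: "'i set \<Rightarrow> ('i \<Rightarrow> 'a \<Rightarrow> 'a) \<Rightarrow> ('a \<Rightarrow> 'i \<Rightarrow> 'i \<Rightarrow> int) \<Rightarrow> 'a \<Rightarrow> 'a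
   \<Rightarrow> (('i \<Rightarrow> int) \<Rightarrow> ('i \<Rightarrow> int)) \<Rightarrow> (('i \<Rightarrow> int) \<Rightarrow> ('i \<Rightarrow> int)) \<Rightarrow> bool"
  for I rho C a where
  r0: "reach I rho C a a id id"
| rS: "reach I rho C a b w w' \<Longrightarrow> i \<in> I \<Longrightarrow>
     reach I rho C a (rho i b) (sigma I C b i \<circ> w) (w' \<circ> sigma I C (rho i b) i)"

lemma lin_comp: "lin f \<Longrightarrow> lin g \<Longrightarrow> lin (f \<circ> g)"
  unfolding lin_def by simp

lemma lin_id: "lin id" unfolding lin_def by simp

lemma lin_zero: "lin f \<Longrightarrow> f (\<lambda>k. 0) = (\<lambda>k. 0)"
proof -
  assume "lin f"
  hence "f (\<lambda>k. 0 * y k) = (\<lambda>k. 0 * f y k)" unfolding lin_def by blast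
  thus ?thesis by simp
qed

lemma lin_neg: "lin f \<Longrightarrow> f (- x) = - f x"
proof -
  assume "lin f"
  hence "f (\<lambda>k. (-1) * x k) = (\<lambda>k. (-1) * f x k)" unfolding lin_def by blast
  thus ?thesis by (simp add: fun_Compl_def)
qed

lemma lin_sum: assumes L: "lin f" and F: "finite F"
  shows "f (\<lambda>k. \<Sum>i\<in>F. c i * g i k) = (\<lambda>k. \<Sum>i\<in>F. c i * f (g i) k)"
  using F
proof (induction F rule: finite_induct)
  case empty thus ?case using lin_zero[OF L] by simp
next
  case (insert x F)
  have "f (\<lambda>k. \<Sum>i\<in>insert x F. c i * g i k) = f (\<lambda>k. c x * g x k + (\<Sum>i\<in>F. c i * g i k))"
    using insert by simp
  also have "\<dots> = (\<lambda>k. f (\<lambda>k. c x * g x k) k + f (\<lambda>k. \<Sum>i\<in>F. c i * g i k) k)"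
    using spec[OF spec[OF conjunct1[OF L[unfolded lin_def]], of "\<lambda>k. c x * g x k"], of "\<lambda>k. \<Sum>i\<in>F. c i * g i k"]
    by simp
  also have "\<dots> = (\<lambda>k. c x * f (g x) k + (\<Sum>i\<in>F. c i * f (g i) k))"
  proof -
    have "f (\<lambda>k. c x * g x k) = (\<lambda>k. c x * f (g x) k)" using L unfolding lin_def by blast
    thus ?thesis using insert(3) by simp
  qed
  also have "\<dots> = (\<lambda>k. \<Sum>i\<in>insert x F. c i * f (g i) k)" using insert by simp
  finally show ?case .
qed

lemma neg_neg_fun: "- (- (v::'i \<Rightarrow> int)) = v" by (simp add: fun_eq_iff)

locale rsys =
  fixes I :: "'i set" and A :: "'a set" and rho :: "'i \<Rightarrow> 'a \<Rightarrow> 'a"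
    and C :: "'a \<Rightarrow> 'i \<Rightarrow> 'i \<Rightarrow> int" and R :: "'a \<Rightarrow> ('i \<Rightarrow> int) set"
  assumes rs: "root_system I A rho C R"
begin

lemma cs: "cartan_scheme I A rho C" using rs unfolding root_system_def by blast
lemma finI: "finite I" and Ine: "I \<noteq> {}" and Ane: "A \<noteq> {}"
  using cs unfolding cartan_scheme_def by blast+
lemma rhoA: "i \<in> I \<Longrightarrow> a \<in> A \<Longrightarrow> rho i a \<in> A"
  and rho2: "i \<in> I \<Longrightarrow> a \<in> A \<Longrightarrow> rho i (rho i a) = a"
  using cs unfolding cartan_scheme_def by blast+
lemma Cii: "a \<in> A \<Longrightarrow> i \<in> I \<Longrightarrow> C a i i = 2"
  and Csym0: "a \<in> A \<Longrightarrow> i \<in> I \<Longrightarrow> j \<in> I \<Longrightarrow> C a i j = 0 \<Longrightarrow> C a j i = 0"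
  using cs unfolding cartan_scheme_def gen_cartan_matrix_def by blast+
lemma C2': "\<forall>a\<in>A. \<forall>i\<in>I. \<forall>j\<in>I. C a i j = C (rho i a) i j"
  using cs unfolding cartan_scheme_def by blast
lemma C2: "a \<in> A \<Longrightarrow> i \<in> I \<Longrightarrow> j \<in> I \<Longrightarrow> C (rho i a) i j = C a i j"
  using C2' by metis
lemma RS: "(\<forall>a\<in>A. R a \<subseteq> zvec I) \<and>
     (\<forall>a\<in>A. R a = pos_roots (R a) \<union> uminus ` pos_roots (R a)) \<and>
     (\<forall>a\<in>A. \<forall>i\<in>I. R a \<inter> {v. \<exists>k::int. v = (\<lambda>j. k * alpha i j)} = {alpha i, - alpha i}) \<and>
     (\<forall>a\<in>A. \<forall>i\<in>I. sigma I C a i ` R a = R (rho i a)) \<and>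
     (\<forall>a\<in>A. \<forall>i\<in>I. \<forall>j\<in>I. i \<noteq> j \<longrightarrow> finite (R a \<inter> cone2 i j) \<longrightarrow>
        ((rho i \<circ> rho j) ^^ card (R a \<inter> cone2 i j)) a = a)"
  using rs unfolding root_system_def by (elim conjE) (intro conjI)
lemma Rz: assumes "a \<in> A" shows "R a \<subseteq> zvec I" using RS[THEN conjunct1] assms by (rule bspec)
lemma R1: assumes "a \<in> A" shows "R a = pos_roots (R a) \<union> uminus ` pos_roots (R a)"
  using RS[THEN conjunct2, THEN conjunct1] assms by (rule bspec)
lemma R2: assumes "a \<in> A" "i \<in> I" shows "R a \<inter> {v. \<exists>k::int. v = (\<lambda>j. k * alpha i j)} = {alpha i, - alpha i}"
proof -
  from RS[THEN conjunct2, THEN conjunct2, THEN conjunct1] assms(1)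
  have "\<forall>i\<in>I. R a \<inter> {v. \<exists>k::int. v = (\<lambda>j. k * alpha i j)} = {alpha i, - alpha i}" by (rule bspec)
  from this assms(2) show ?thesis by (rule bspec)
qed
lemma R3: assumes "a \<in> A" "i \<in> I" shows "sigma I C a i ` R a = R (rho i a)"
proof -
  from RS[THEN conjunct2, THEN conjunct2, THEN conjunct2, THEN conjunct1] assms(1)
  have "\<forall>i\<in>I. sigma I C a i ` R a = R (rho i a)" by (rule bspec)
  from this assms(2) show ?thesis by (rule bspec)
qed
lemma R4: assumes "a \<in> A" "i \<in> I" "j \<in> I" "i \<noteq> j" "finite (R a \<inter> cone2 i j)"
  shows "((rho i \<circ> rho j) ^^ card (R a \<inter> cone2 i j)) a = a"
proof -
  from RS[THEN conjunct2, THEN conjunct2, THEN conjunct2, THEN conjunct2] assms(1)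
  have "\<forall>i\<in>I. \<forall>j\<in>I. i \<noteq> j \<longrightarrow> finite (R a \<inter> cone2 i j) \<longrightarrow>
        ((rho i \<circ> rho j) ^^ card (R a \<inter> cone2 i j)) a = a" by (rule bspec)
  from this assms(2) have "\<forall>j\<in>I. i \<noteq> j \<longrightarrow> finite (R a \<inter> cone2 i j) \<longrightarrow>
        ((rho i \<circ> rho j) ^^ card (R a \<inter> cone2 i j)) a = a" by (rule bspec)
  from this assms(3) have "i \<noteq> j \<longrightarrow> finite (R a \<inter> cone2 i j) \<longrightarrow>
        ((rho i \<circ> rho j) ^^ card (R a \<inter> cone2 i j)) a = a" by (rule bspec)
  thus ?thesis using assms(4,5) by blast
qed

lemma alphaR: "a \<in> A \<Longrightarrow> i \<in> I \<Longrightarrow> alpha i \<in> R a"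
  using R2[of a i] by blast

lemma zero_notR: "a \<in> A \<Longrightarrow> (\<lambda>k. 0) \<notin> R a"
proof
  assume a: "a \<in> A" and z: "(\<lambda>k. 0::int) \<in> R a"
  obtain i where i: "i \<in> I" using Ine by auto
  have "(\<lambda>k. 0::int) = (\<lambda>j. 0 * alpha i j)" by simp
  hence "(\<lambda>k. 0::int) \<in> R a \<inter> {v. \<exists>k::int. v = (\<lambda>j. k * alpha i j)}" using z by blast
  hence "(\<lambda>k. 0::int) \<in> {alpha i, - alpha i}" using R2[OF a i] by simp
  hence "(\<lambda>k. 0::int) = alpha i \<or> (\<lambda>k. 0::int) = - alpha i" by blast
  thus False
  proof
    assume h: "(\<lambda>k. 0::int) = alpha i"
    have "(0::int) = alpha i i" using fun_cong[OF h, of i] by simp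
    thus False by (simp add: alpha_def)
  next
    assume h: "(\<lambda>k. 0::int) = - alpha i"
    have "(0::int) = (- alpha i) i" using fun_cong[OF h, of i] by simp
    thus False by (simp add: alpha_def)
  qed
qed

lemma signs: "a \<in> A \<Longrightarrow> v \<in> R a \<Longrightarrow> (\<forall>j. v j \<ge> 0) \<or> (\<forall>j. v j \<le> 0)"
proof -
  assume a: "a \<in> A" and v: "v \<in> R a"
  from v R1[OF a] have "v \<in> pos_roots (R a) \<or> v \<in> uminus ` pos_roots (R a)" by blast
  thus ?thesis unfolding pos_roots_def by auto
qed

lemma sigma_inv: assumes a: "a \<in> A" and i: "i \<in> I"
  shows "sigma I C (rho i a) i (sigma I C a i v) = v"
proof -
  define s where "s = (\<Sum>j\<in>I. C a i j * v j)"
  have e: "sigma I C a i v = (\<lambda>k. v k - (if k = i then s else 0))"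
    unfolding sigma_def s_def by simp
  have "(\<Sum>j\<in>I. C (rho i a) i j * (v j - (if j = i then s else 0)))
      = (\<Sum>j\<in>I. C a i j * v j - (if j = i then C a i j * s else 0))"
    by (rule sum.cong) (auto simp: C2[OF a i] algebra_simps)
  also have "\<dots> = s - C a i i * s"
    using i finI by (simp add: sum_subtractf s_def)
  also have "\<dots> = - s" using Cii[OF a i] by simp
  finally have S: "(\<Sum>j\<in>I. C (rho i a) i j * (v j - (if j = i then s else 0))) = - s" .
  have "sigma I C (rho i a) i (\<lambda>k. v k - (if k = i then s else 0)) = (\<lambda>k. (v k - (if k = i then s else 0)) - (if k = i then -s else 0))"
    unfolding sigma_def by (simp only: S)
  then show ?thesis unfolding e by auto
qed

lemma sigma_inv2: assumes a: "a \<in> A" and i: "i \<in> I"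
  shows "sigma I C a i (sigma I C (rho i a) i v) = v"
  using sigma_inv[OF rhoA[OF i a] i, of v] rho2[OF i a] by simp

lemma sigma_alpha: "i \<in> I \<Longrightarrow> j \<in> I \<Longrightarrow> sigma I C a i (alpha j) = (\<lambda>k. alpha j k - C a i j * alpha i k)"
proof -
  assume i: "i \<in> I" and j: "j \<in> I"
  have "(\<Sum>l\<in>I. C a i l * alpha j l) = (\<Sum>l\<in>I. if l = j then C a i j else 0)"
    by (rule sum.cong) (auto simp: alpha_def)
  also have "\<dots> = C a i j" using j finI by simp
  finally show ?thesis unfolding sigma_def by (auto simp: alpha_def)
qed

lemma shift: assumes a: "a \<in> A" and i: "i \<in> I" and j: "j \<in> I"
  shows "(\<lambda>k. alpha j k - C a i j * alpha i k) \<in> R a"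
proof -
  have b: "rho i a \<in> A" using rhoA[OF i a] .
  have "alpha j \<in> R (rho i a)" using alphaR[OF b j] .
  hence "sigma I C (rho i a) i (alpha j) \<in> R (rho i (rho i a))" using R3[OF b i] by blast
  thus ?thesis using sigma_alpha[OF i j, of "rho i a"] C2[OF a i j] rho2[OF i a] by simp
qed

lemma decoupled: assumes a: "a \<in> A" and j: "j \<in> I" and v: "v \<in> R a" and vj: "v j \<noteq> 0"
  and l: "l \<noteq> j" "v l \<noteq> 0" and c: "\<forall>m\<in>I. m \<noteq> j \<longrightarrow> v m \<noteq> 0 \<longrightarrow> C a j m = 0"
  shows False
proof -
  have "(\<Sum>m\<in>I. C a j m * v m) = (\<Sum>m\<in>I. if m = j then 2 * v j else 0)"
    by (rule sum.cong) (use c Cii[OF a j] in auto)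
  also have "\<dots> = 2 * v j" using j finI by simp
  finally have s: "(\<Sum>m\<in>I. C a j m * v m) = 2 * v j" .
  have w: "sigma I C a j v \<in> R (rho j a)" using R3[OF a j] v by blast
  have wj: "sigma I C a j v j = - v j" unfolding sigma_def s by simp
  have wl: "sigma I C a j v l = v l" unfolding sigma_def using l by simp
  have A1: "v j \<ge> 0 \<and> v l \<ge> 0 \<or> v j \<le> 0 \<and> v l \<le> 0" using signs[OF a v] by blast
  have A2: "- v j \<ge> 0 \<and> v l \<ge> 0 \<or> - v j \<le> 0 \<and> v l \<le> 0"
    using signs[OF rhoA[OF j a] w] wj wl by metis
  from A1 A2 vj l(2) show False by linarith
qed

lemma sum_alpha: "l \<in> I \<Longrightarrow> (\<Sum>m\<in>I. f m * alpha l m) = f l"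
proof -
  assume l: "l \<in> I"
  have "(\<Sum>m\<in>I. f m * alpha l m) = (\<Sum>m\<in>I. if m = l then f l else 0)"
    by (rule sum.cong) (auto simp: alpha_def)
  also have "\<dots> = f l" using l finI by simp
  finally show ?thesis .
qed

lemma G: assumes a: "a \<in> A" and k: "k \<in> I" and j: "j \<in> I" and l: "l \<in> I"
  and d: "j \<noteq> l" "k \<noteq> j" "k \<noteq> l"
  and z: "C a j l = 0" "C a j k = 0" "C a k j = 0"
  shows "C (rho k a) j l = 0"
proof (rule ccontr)
  define b where "b = rho k a"
  have b: "b \<in> A" unfolding b_def using rhoA[OF k a] .
  define c where "c = C b j l"
  assume "C (rho k a) j l \<noteq> 0"
  hence c0: "c \<noteq> 0" unfolding c_def b_def .
  define g where "g = (\<lambda>m. alpha l m - c * alpha j m)"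
  have g: "g \<in> R b" unfolding g_def c_def using shift[OF b j l] .
  have "sigma I C b k g \<in> R (rho k b)" using R3[OF b k] g by blast
  hence s1: "sigma I C b k g \<in> R a" unfolding b_def using rho2[OF k a] by simp
  have "(\<Sum>m\<in>I. C b k m * g m) = (\<Sum>m\<in>I. C b k m * alpha l m) - c * (\<Sum>m\<in>I. C b k m * alpha j m)"
    unfolding g_def by (simp add: algebra_simps sum_subtractf sum_distrib_left)
  also have "\<dots> = C b k l - c * C b k j" using sum_alpha[OF l] sum_alpha[OF j] by simp
  also have "\<dots> = C a k l" unfolding b_def using C2[OF a k l] C2[OF a k j] z(3) by simp
  finally have S: "(\<Sum>m\<in>I. C b k m * g m) = C a k l" .
  define v where "v = sigma I C b k g"
  have v: "v = (\<lambda>m. alpha l m - c * alpha j m - (if m = k then C a k l else 0))"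
    unfolding v_def sigma_def S unfolding g_def by simp
  have vR: "v \<in> R a" using s1 unfolding v_def .
  have vj: "v j \<noteq> 0" unfolding v using d c0 by (simp add: alpha_def)
  have vl: "v l \<noteq> 0" unfolding v using d by (simp add: alpha_def)
  have cc: "\<forall>m\<in>I. m \<noteq> j \<longrightarrow> v m \<noteq> 0 \<longrightarrow> C a j m = 0"
  proof (intro ballI impI)
    fix m assume "m \<in> I" "m \<noteq> j" "v m \<noteq> 0"
    hence "m = l \<or> m = k" unfolding v by (auto simp: alpha_def split: if_splits)
    thus "C a j m = 0" using z by auto
  qed
  show False using decoupled[OF a j vR vj _ vl cc] d by auto
qed

lemma prop_step: assumes sub: "J \<subseteq> I" and a: "a \<in> A" and k: "k \<in> I"
  and P: "\<forall>x\<in>J. \<forall>y\<in>I-J. C a x y = 0"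
  shows "\<forall>x\<in>J. \<forall>y\<in>I-J. C (rho k a) x y = 0"
proof (intro ballI)
  fix x y assume x: "x \<in> J" and y: "y \<in> I - J"
  have xI: "x \<in> I" using x sub by auto
  have yI: "y \<in> I" using y by auto
  have Q: "\<And>x y. x \<in> J \<Longrightarrow> y \<in> I - J \<Longrightarrow> C a x y = 0 \<and> C a y x = 0"
    using P Csym0[OF a] sub by blast
  have b: "rho k a \<in> A" using rhoA[OF k a] .
  show "C (rho k a) x y = 0"
  proof (cases "k = x")
    case True thus ?thesis using C2[OF a xI yI] Q[OF x y] by simp
  next
    case kx: False
    show ?thesis
    proof (cases "k = y")
      case True
      hence "C (rho k a) y x = 0" using C2[OF a yI xI] Q[OF x y] by simp
      thus ?thesis using Csym0[OF b yI xI] by simp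
    next
      case ky: False
      have xy: "x \<noteq> y" using x y by auto
      show ?thesis
      proof (cases "k \<in> J")
        case True
        have "C (rho k a) y x = 0"
          by (rule G[OF a k yI xI]) (use xy kx ky Q[OF x y] Q[OF True y] in auto)
        thus ?thesis using Csym0[OF b yI xI] by simp
      next
        case False
        hence kJ: "k \<in> I - J" using k by auto
        show ?thesis
          by (rule G[OF a k xI yI]) (use xy kx ky Q[OF x y] Q[OF x kJ] in auto)
      qed
    qed
  qed
qed

lemma prop_path: assumes sub: "J \<subseteq> I" and a: "a \<in> A"
  and P: "\<forall>x\<in>J. \<forall>y\<in>I-J. C a x y = 0"
  shows "set is \<subseteq> I \<Longrightarrow> foldr rho is a \<in> A \<and> (\<forall>x\<in>J. \<forall>y\<in>I-J. C (foldr rho is a) x y = 0)"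
proof (induction "is")
  case Nil thus ?case using a P by simp
next
  case (Cons i "is")
  hence i: "i \<in> I" and IH: "foldr rho is a \<in> A \<and> (\<forall>x\<in>J. \<forall>y\<in>I-J. C (foldr rho is a) x y = 0)" by auto
  show ?case using rhoA[OF i] prop_step[OF sub _ i] IH by simp
qed

lemma noW: assumes sub: "J \<subseteq> I" and W: "\<forall>a\<in>A. R a \<subseteq> zspan J \<union> zspan (I - J)"
  and a: "a \<in> A" and x: "x \<in> J" and y: "y \<in> I - J"
  shows "C a x y = 0"
proof (rule ccontr)
  assume c: "C a x y \<noteq> 0"
  have xI: "x \<in> I" using x sub by auto
  have yI: "y \<in> I" using y by auto
  have xy: "x \<noteq> y" using x y by auto
  define g where "g = (\<lambda>k. alpha y k - C a x y * alpha x k)"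
  have g: "g \<in> R a" unfolding g_def using shift[OF a xI yI] .
  have "g x \<noteq> 0" unfolding g_def using c xy by (simp add: alpha_def)
  hence "g \<notin> zspan (I - J)" using x unfolding zspan_def by auto
  moreover have "g y \<noteq> 0" unfolding g_def using xy by (simp add: alpha_def)
  hence "g \<notin> zspan J" using y unfolding zspan_def by auto
  ultimately show False using g W a by blast
qed

lemma sigma_Z: assumes K: "K \<subseteq> I" and z: "\<forall>i\<in>I-K. \<forall>l\<in>K. C b i l = 0"
  and v: "v \<in> zspan K" and i: "i \<in> I"
  shows "sigma I C b i v \<in> zspan K"
proof -
  { fix k assume k: "k \<notin> K"
    have "sigma I C b i v k = 0"
    proof (cases "k = i")
      case True
      have "(\<Sum>l\<in>I. C b i l * v l) = 0"
        by (rule sum.neutral) (use z v k True i in \<open>auto simp: zspan_def\<close>)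
      thus ?thesis using v k unfolding sigma_def zspan_def by simp
    next
      case False thus ?thesis using v k unfolding sigma_def zspan_def by simp
    qed }
  thus ?thesis unfolding zspan_def by auto
qed

lemma lin_sigma: "lin (sigma I C b i)"
  unfolding lin_def sigma_def
  by (auto simp: fun_eq_iff sum.distrib sum_distrib_left algebra_simps)

lemma sigma_neg: "sigma I C b i (- v) = - sigma I C b i v"
  using lin_neg[OF lin_sigma] .

lemma zvec_expand: "x \<in> zvec I \<Longrightarrow> x = (\<lambda>k. \<Sum>i\<in>I. x i * alpha i k)"
proof (rule ext)
  fix k assume x: "x \<in> zvec I"
  have "(\<Sum>i\<in>I. x i * alpha i k) = (\<Sum>i\<in>I. if i = k then x k else 0)"
    by (rule sum.cong) (auto simp: alpha_def)
  also have "\<dots> = x k" using x finI by (auto simp: zvec_def)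
  finally show "x k = (\<Sum>i\<in>I. x i * alpha i k)" by simp
qed

lemma reach_inv: assumes a: "a \<in> A"
  shows "reach I rho C a b w w' \<Longrightarrow> b \<in> A \<and> w ` R a = R b \<and> (\<forall>v. w' (w v) = v) \<and> lin w \<and> lin w'"
proof (induction rule: reach.induct)
  case r0 thus ?case using a lin_id by (simp add: id_def)
next
  case (rS b w w' i)
  hence b: "b \<in> A" and i: "i \<in> I" by auto
  have "(sigma I C b i \<circ> w) ` R a = sigma I C b i ` (w ` R a)" by (simp add: image_comp)
  also have "\<dots> = R (rho i b)" using rS R3[OF b i] by simp
  finally have img: "(sigma I C b i \<circ> w) ` R a = R (rho i b)" .
  have l1: "lin (sigma I C b i \<circ> w)" using rS lin_comp lin_sigma by blast
  have l2: "lin (w' \<circ> sigma I C (rho i b) i)" using rS lin_comp lin_sigma by blast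
  have inv: "\<forall>v. (w' \<circ> sigma I C (rho i b) i) ((sigma I C b i \<circ> w) v) = v"
    using rS sigma_inv[OF b i] by simp
  show ?case using rhoA[OF i b] img l1 l2 inv by blast
qed

lemma pos_step: assumes b: "b \<in> A" and i: "i \<in> I" and p: "p \<in> pos_roots (R b)" and pa: "p \<noteq> alpha i"
  shows "sigma I C b i p \<in> pos_roots (R (rho i b))"
proof -
  have pR: "p \<in> R b" and pp: "\<forall>j. p j \<ge> 0" using p unfolding pos_roots_def by auto
  have "\<exists>j. j \<noteq> i \<and> p j \<noteq> 0"
  proof (rule ccontr)
    assume "\<not> ?thesis"
    hence "p = (\<lambda>j. p i * alpha i j)" by (auto simp: fun_eq_iff alpha_def)
    hence "p \<in> R b \<inter> {v. \<exists>k::int. v = (\<lambda>j. k * alpha i j)}" using pR by blast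
    hence "p \<in> {alpha i, - alpha i}" using R2[OF b i] by simp
    hence "p = - alpha i" using pa by simp
    hence "p i = -1" by (simp add: alpha_def)
    moreover have "p i \<ge> 0" using pp by blast
    ultimately show False by simp
  qed
  then obtain j where j: "j \<noteq> i" "p j \<noteq> 0" by blast
  have sR: "sigma I C b i p \<in> R (rho i b)" using R3[OF b i] pR by blast
  have sj: "sigma I C b i p j = p j" using j unfolding sigma_def by simp
  have "p j \<ge> 0" using pp by blast
  hence pj: "p j > 0" using j by linarith
  have "\<not> (\<forall>k. sigma I C b i p k \<le> 0)"
  proof
    assume "\<forall>k. sigma I C b i p k \<le> 0"
    hence "sigma I C b i p j \<le> 0" by blast
    thus False using sj pj by simp
  qed
  hence "\<forall>k. sigma I C b i p k \<ge> 0" using signs[OF rhoA[OF i b] sR] by blast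
  thus ?thesis using sR unfolding pos_roots_def by simp
qed

definition Nset where "Nset a b w = {g \<in> pos_roots (R a). w g \<notin> pos_roots (R b)}"

end

locale dsys = rsys I A rho C R
  for I :: "'i set" and A :: "'a set" and rho C R +
  fixes J :: "'i set"
  assumes sub: "J \<subseteq> I"
    and dec: "\<forall>a\<in>A. \<forall>x\<in>J. \<forall>y\<in>I-J. C a x y = 0 \<and> C a y x = 0"
begin

definition W where "W = zspan J \<union> zspan (I - J)"

lemma zJ: "b \<in> A \<Longrightarrow> i \<in> I \<Longrightarrow> v \<in> zspan J \<Longrightarrow> sigma I C b i v \<in> zspan J"
  by (rule sigma_Z[OF sub]) (use dec in auto)

lemma zJ': "b \<in> A \<Longrightarrow> i \<in> I \<Longrightarrow> v \<in> zspan (I - J) \<Longrightarrow> sigma I C b i v \<in> zspan (I - J)"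
  by (rule sigma_Z) (use dec in auto)

lemma zJ_iff: assumes b: "b \<in> A" and i: "i \<in> I"
  shows "sigma I C b i v \<in> zspan J \<longleftrightarrow> v \<in> zspan J"
    and "sigma I C b i v \<in> zspan (I - J) \<longleftrightarrow> v \<in> zspan (I - J)"
  using zJ[OF b i, of v] zJ[OF rhoA[OF i b] i, of "sigma I C b i v"]
    zJ'[OF b i, of v] zJ'[OF rhoA[OF i b] i, of "sigma I C b i v"] sigma_inv[OF b i, of v]
  by auto

lemma W_iff: "b \<in> A \<Longrightarrow> i \<in> I \<Longrightarrow> sigma I C b i v \<in> W \<longleftrightarrow> v \<in> W"
  unfolding W_def using zJ_iff by blast

lemma zspan_neg: "v \<in> zspan K \<Longrightarrow> - v \<in> zspan K"
  unfolding zspan_def by simp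

lemma W_neg: "v \<in> W \<Longrightarrow> - v \<in> W"
  unfolding W_def using zspan_neg by blast

lemma alphaW: assumes i: "i \<in> I" shows "(\<lambda>k. c * alpha i k) \<in> W"
proof (cases "i \<in> J")
  case True
  hence "(\<lambda>k. c * alpha i k) \<in> zspan J" unfolding zspan_def alpha_def by auto
  thus ?thesis unfolding W_def by blast
next
  case False
  hence "(\<lambda>k. c * alpha i k) \<in> zspan (I - J)" using i unfolding zspan_def alpha_def by auto
  thus ?thesis unfolding W_def by blast
qed

lemma alphaW1: "i \<in> I \<Longrightarrow> alpha i \<in> W"
  using alphaW[of i 1] by simp

lemma cone_W: assumes a: "a \<in> A" and i: "i \<in> I" and j: "j \<in> I" and ij: "i \<noteq> j"
  and v: "v \<in> R a" and vc: "v \<in> cone2 i j"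
  shows "v \<in> W"
proof -
  obtain m n :: nat where vm: "v = (\<lambda>k. int m * alpha i k + int n * alpha j k)"
    using vc unfolding cone2_def by blast
  show ?thesis
  proof (cases "m = 0")
    case True
    hence "v = (\<lambda>k. int n * alpha j k)" using vm by simp
    thus ?thesis using alphaW[OF j] by simp
  next
    case m0: False
    show ?thesis
    proof (cases "n = 0")
      case True
      hence "v = (\<lambda>k. int m * alpha i k)" using vm by simp
      thus ?thesis using alphaW[OF i] by simp
    next
      case n0: False
      have vz: "\<And>q. q \<noteq> i \<Longrightarrow> q \<noteq> j \<Longrightarrow> v q = 0" using vm by (simp add: alpha_def)
      show ?thesis
      proof (cases "i \<in> J \<longleftrightarrow> j \<in> J")
        case True
        show ?thesis
        proof (cases "i \<in> J")
          case iJ: True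
          have "\<forall>q. q \<notin> J \<longrightarrow> v q = 0"
          proof (intro allI impI)
            fix q assume "q \<notin> J" hence "q \<noteq> i" "q \<noteq> j" using iJ True by auto
            thus "v q = 0" by (rule vz)
          qed
          hence "v \<in> zspan J" unfolding zspan_def by simp
          thus ?thesis unfolding W_def by blast
        next
          case iJ: False
          have "\<forall>q. q \<notin> I - J \<longrightarrow> v q = 0"
          proof (intro allI impI)
            fix q assume "q \<notin> I - J" hence "q \<noteq> i" "q \<noteq> j" using iJ True i j by auto
            thus "v q = 0" by (rule vz)
          qed
          hence "v \<in> zspan (I - J)" unfolding zspan_def by simp
          thus ?thesis unfolding W_def by blast
        qed
      next
        case False
        have cij: "C a i j = 0"
        proof (cases "i \<in> J")
          case True
          hence "j \<in> I - J" using False j by blast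
          thus ?thesis using dec a True by blast
        next
          case iJ: False
          hence "i \<in> I - J" "j \<in> J" using False i by blast+
          thus ?thesis using dec a by blast
        qed
        have vi: "v i \<noteq> 0" using vm ij m0 by (simp add: alpha_def)
        have vj: "v j \<noteq> 0" using vm ij n0 by (simp add: alpha_def)
        have "\<forall>q\<in>I. q \<noteq> i \<longrightarrow> v q \<noteq> 0 \<longrightarrow> C a i q = 0"
        proof (intro ballI impI)
          fix q assume "q \<in> I" "q \<noteq> i" "v q \<noteq> 0"
          hence "q = j" using vz by blast
          thus "C a i q = 0" using cij by simp
        qed
        from decoupled[OF a i v vi _ vj this] ij show ?thesis by auto
      qed
    qed
  qed
qed

lemma R1_restrict: assumes S: "S = pos_roots S \<union> uminus ` pos_roots S"
  and Wn: "\<And>v. v \<in> X \<Longrightarrow> - v \<in> X"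
  shows "S \<inter> X = pos_roots (S \<inter> X) \<union> uminus ` pos_roots (S \<inter> X)"
proof (rule equalityI; rule subsetI)
  fix v assume v: "v \<in> S \<inter> X"
  hence "v \<in> pos_roots S \<or> v \<in> uminus ` pos_roots S" using S by blast
  thus "v \<in> pos_roots (S \<inter> X) \<union> uminus ` pos_roots (S \<inter> X)"
  proof
    assume "v \<in> pos_roots S" thus ?thesis using v unfolding pos_roots_def by blast
  next
    assume "v \<in> uminus ` pos_roots S"
    then obtain p where p: "p \<in> pos_roots S" and vp: "v = - p" by blast
    have "p = - v" using vp by (simp add: fun_eq_iff)
    hence "p \<in> X" using Wn v by blast
    hence "p \<in> pos_roots (S \<inter> X)" using p unfolding pos_roots_def by blast
    thus ?thesis using vp by blast
  qed
next
  fix v assume v: "v \<in> pos_roots (S \<inter> X) \<union> uminus ` pos_roots (S \<inter> X)"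
  show "v \<in> S \<inter> X"
  proof (cases "v \<in> pos_roots (S \<inter> X)")
    case True thus ?thesis unfolding pos_roots_def by blast
  next
    case False
    then obtain p where p: "p \<in> pos_roots (S \<inter> X)" and vp: "v = - p" using v by blast
    have "p \<in> pos_roots S" using p unfolding pos_roots_def by blast
    hence "v \<in> S" using S vp by blast
    moreover have "v \<in> X" using Wn p vp unfolding pos_roots_def by blast
    ultimately show ?thesis by blast
  qed
qed

lemma RhatW: "R a \<inter> zspan J \<union> R a \<inter> zspan (I - J) = R a \<inter> W"
  unfolding W_def by blast

lemma Rhat_rs: "root_system I A rho C (\<lambda>a. R a \<inter> zspan J \<union> R a \<inter> zspan (I - J))"
  unfolding root_system_def RhatW
proof (intro conjI ballI impI)
  show "cartan_scheme I A rho C" using cs .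
next
  fix a assume a: "a \<in> A"
  show "R a \<inter> W \<subseteq> zvec I" using Rz[OF a] by blast
  show "R a \<inter> W = pos_roots (R a \<inter> W) \<union> uminus ` pos_roots (R a \<inter> W)"
    by (rule R1_restrict[OF R1[OF a] W_neg])
next
  fix a i assume a: "a \<in> A" and i: "i \<in> I"
  have "R a \<inter> W \<inter> {v. \<exists>k::int. v = (\<lambda>j. k * alpha i j)} = (R a \<inter> {v. \<exists>k::int. v = (\<lambda>j. k * alpha i j)}) \<inter> W"
    by blast
  also have "\<dots> = {alpha i, - alpha i}" using R2[OF a i] alphaW1[OF i] W_neg[OF alphaW1[OF i]] by blast
  finally show "R a \<inter> W \<inter> {v. \<exists>k::int. v = (\<lambda>j. k * alpha i j)} = {alpha i, - alpha i}" .
  show "sigma I C a i ` (R a \<inter> W) = R (rho i a) \<inter> W"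
  proof (rule equalityI; rule subsetI)
    fix u assume "u \<in> sigma I C a i ` (R a \<inter> W)"
    then obtain v where v: "v \<in> R a" "v \<in> W" and u: "u = sigma I C a i v" by blast
    show "u \<in> R (rho i a) \<inter> W" using R3[OF a i] v u W_iff[OF a i] by blast
  next
    fix u assume u: "u \<in> R (rho i a) \<inter> W"
    then obtain v where v: "v \<in> R a" and uv: "u = sigma I C a i v" using R3[OF a i] by blast
    have "v \<in> W" using W_iff[OF a i, of v] u uv by blast
    thus "u \<in> sigma I C a i ` (R a \<inter> W)" using v uv by blast
  qed
next
  fix a i j assume a: "a \<in> A" and i: "i \<in> I" and j: "j \<in> I" and ij: "i \<noteq> j"
  have e: "R a \<inter> W \<inter> cone2 i j = R a \<inter> cone2 i j" using cone_W[OF a i j ij] by blast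
  assume "finite (R a \<inter> W \<inter> cone2 i j)"
  thus "((rho i \<circ> rho j) ^^ card (R a \<inter> W \<inter> cone2 i j)) a = a"
    unfolding e using R4[OF a i j ij] by blast
qed

lemma bad_inv: assumes a: "a \<in> A" and bp: "bt \<in> pos_roots (R a)" and bW: "bt \<notin> W"
  shows "reach I rho C a b w w' \<Longrightarrow> w bt \<in> pos_roots (R b) \<and> w bt \<notin> W"
proof (induction rule: reach.induct)
  case r0 thus ?case using bp bW by simp
next
  case (rS b w w' i)
  have b: "b \<in> A" using reach_inv[OF a rS(1)] by blast
  have i: "i \<in> I" using rS by blast
  have x: "w bt \<in> pos_roots (R b)" and xW: "w bt \<notin> W" using rS by auto
  have "w bt \<noteq> alpha i"
  proof
    assume "w bt = alpha i" thus False using xW alphaW1[OF i] by simp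
  qed
  hence "sigma I C b i (w bt) \<in> pos_roots (R (rho i b))" using pos_step[OF b i x] by blast
  moreover have "sigma I C b i (w bt) \<notin> W" using W_iff[OF b i] xW by blast
  ultimately show ?case by simp
qed

lemma grow_step: assumes a: "a \<in> A" and bp: "bt \<in> pos_roots (R a)" and bW: "bt \<notin> W"
  and r: "reach I rho C a b w w'"
  shows "\<exists>b2 w2 w2'. reach I rho C a b2 w2 w2' \<and> Nset a b w \<subset> Nset a b2 w2"
proof -
  have inv: "b \<in> A" "w ` R a = R b" "\<forall>v. w' (w v) = v" "lin w" "lin w'"
    using reach_inv[OF a r] by auto
  have b: "b \<in> A" using inv by blast
  have x: "w bt \<in> pos_roots (R b)" using bad_inv[OF a bp bW r] by blast
  have pre: "\<And>i. i \<in> I \<Longrightarrow> w' (alpha i) \<in> R a \<and> w (w' (alpha i)) = alpha i"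
  proof -
    fix i assume i: "i \<in> I"
    have "alpha i \<in> w ` R a" using alphaR[OF b i] inv(2) by simp
    then obtain g where g: "g \<in> R a" "alpha i = w g" by blast
    thus "w' (alpha i) \<in> R a \<and> w (w' (alpha i)) = alpha i" using inv(3) by simp
  qed
  have "\<exists>i\<in>I. w' (alpha i) \<in> pos_roots (R a)"
  proof (rule ccontr)
    assume "\<not> ?thesis"
    hence np: "\<And>i. i \<in> I \<Longrightarrow> w' (alpha i) \<notin> pos_roots (R a)" by blast
    have neg: "\<And>i k. i \<in> I \<Longrightarrow> w' (alpha i) k \<le> 0"
    proof -
      fix i k assume i: "i \<in> I"
      have "w' (alpha i) \<in> R a" using pre[OF i] by blast
      moreover have "\<not> (\<forall>j. w' (alpha i) j \<ge> 0)" using np[OF i] pre[OF i] unfolding pos_roots_def by blast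
      ultimately show "w' (alpha i) k \<le> 0" using signs[OF a] by blast
    qed
    define x where "x = w bt"
    have xR: "x \<in> R b" and xp: "\<forall>j. x j \<ge> 0" using x unfolding x_def pos_roots_def by auto
    have xz: "x \<in> zvec I" using xR Rz[OF b] by blast
    have "bt = w' x" unfolding x_def using inv(3) by simp
    also have "\<dots> = w' (\<lambda>k. \<Sum>i\<in>I. x i * alpha i k)" using zvec_expand[OF xz] by simp
    also have "\<dots> = (\<lambda>k. \<Sum>i\<in>I. x i * w' (alpha i) k)" by (rule lin_sum[OF inv(5) finI])
    finally have bt: "bt = (\<lambda>k. \<Sum>i\<in>I. x i * w' (alpha i) k)" .
    have "bt = (\<lambda>k. 0)"
    proof (rule ext)
      fix k
      have "(\<Sum>i\<in>I. x i * w' (alpha i) k) \<le> 0"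
        by (rule sum_nonpos) (use xp neg in \<open>auto intro: mult_nonneg_nonpos\<close>)
      moreover have "bt k \<ge> 0" using bp unfolding pos_roots_def by blast
      ultimately show "bt k = 0" using bt by (metis order_antisym)
    qed
    moreover have "bt \<in> R a" using bp unfolding pos_roots_def by blast
    ultimately show False using zero_notR[OF a] by simp
  qed
  then obtain i where i: "i \<in> I" and gp: "w' (alpha i) \<in> pos_roots (R a)" by blast
  define g where "g = w' (alpha i)"
  have wg: "w g = alpha i" unfolding g_def using pre[OF i] by blast
  have r2: "reach I rho C a (rho i b) (sigma I C b i \<circ> w) (w' \<circ> sigma I C (rho i b) i)"
    using rS[OF r i] .
  have b2: "rho i b \<in> A" using rhoA[OF i b] .
  have sub1: "Nset a b w \<subseteq> Nset a (rho i b) (sigma I C b i \<circ> w)"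
  proof
    fix d assume "d \<in> Nset a b w"
    hence dp: "d \<in> pos_roots (R a)" and dn: "w d \<notin> pos_roots (R b)" unfolding Nset_def by auto
    have dR: "d \<in> R a" using dp unfolding pos_roots_def by blast
    have wdR: "w d \<in> R b" using dR inv(2) by blast
    hence "w d \<in> uminus ` pos_roots (R b)" using dn R1[OF b] by blast
    then obtain p where p: "p \<in> pos_roots (R b)" and wdp: "w d = - p" by blast
    have pa: "p \<noteq> alpha i"
    proof
      assume "p = alpha i"
      hence "w d = w (- g)" using wdp wg lin_neg[OF inv(4)] by simp
      hence "d = - g" using inv(3) by metis
      have "d = (\<lambda>k. 0)"
      proof (rule ext)
        fix k
        have "d k \<ge> 0" using dp unfolding pos_roots_def by blast
        moreover have "g k \<ge> 0" using gp unfolding g_def pos_roots_def by blast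
        ultimately show "d k = 0" using \<open>d = - g\<close> by (simp add: fun_eq_iff)
      qed
      thus False using dR zero_notR[OF a] by simp
    qed
    have sp: "sigma I C b i p \<in> pos_roots (R (rho i b))" using pos_step[OF b i p pa] .
    have "(sigma I C b i \<circ> w) d = - sigma I C b i p" using wdp sigma_neg by simp
    moreover have "- sigma I C b i p \<notin> pos_roots (R (rho i b))"
    proof
      assume "- sigma I C b i p \<in> pos_roots (R (rho i b))"
      hence "sigma I C b i p = (\<lambda>k. 0)" using sp unfolding pos_roots_def
        by (auto simp: fun_eq_iff intro: order_antisym)
      thus False using sp zero_notR[OF b2] unfolding pos_roots_def by simp
    qed
    ultimately show "d \<in> Nset a (rho i b) (sigma I C b i \<circ> w)" using dp unfolding Nset_def by simp
  qed
  have gin: "g \<in> Nset a (rho i b) (sigma I C b i \<circ> w)"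
  proof -
    have "(sigma I C b i \<circ> w) g = (\<lambda>k. alpha i k - C b i i * alpha i k)"
      using wg sigma_alpha[OF i i] by simp
    hence yi: "(sigma I C b i \<circ> w) g i = -1" using Cii[OF b i] by (simp add: alpha_def)
    have "(sigma I C b i \<circ> w) g \<notin> pos_roots (R (rho i b))"
    proof
      assume "(sigma I C b i \<circ> w) g \<in> pos_roots (R (rho i b))"
      hence "(sigma I C b i \<circ> w) g i \<ge> 0" unfolding pos_roots_def by blast
      thus False using yi by simp
    qed
    thus ?thesis using gp unfolding Nset_def g_def by simp
  qed
  have gout: "g \<notin> Nset a b w"
  proof -
    have "alpha i \<in> pos_roots (R b)" using alphaR[OF b i] unfolding pos_roots_def alpha_def by simp
    thus ?thesis using wg unfolding Nset_def by simp
  qed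
  have "Nset a b w \<subset> Nset a (rho i b) (sigma I C b i \<circ> w)" using sub1 gin gout by blast
  thus ?thesis using r2 by blast
qed

lemma grow: assumes a: "a \<in> A" and bp: "bt \<in> pos_roots (R a)" and bW: "bt \<notin> W"
  and fin: "finite (R a)"
  shows "\<exists>b w w'. reach I rho C a b w w' \<and> n \<le> card (Nset a b w)"
proof (induction n)
  case 0 show ?case using reach.r0[of I rho C a] by blast
next
  case (Suc n)
  then obtain b w w' where r: "reach I rho C a b w w'" and n: "n \<le> card (Nset a b w)" by blast
  obtain b2 w2 w2' where r2: "reach I rho C a b2 w2 w2'" and ps: "Nset a b w \<subset> Nset a b2 w2"
    using grow_step[OF a bp bW r] by blast
  have "finite (Nset a b2 w2)" using fin unfolding Nset_def pos_roots_def
    by (rule rev_finite_subset) blast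
  hence "card (Nset a b w) < card (Nset a b2 w2)" using ps by (rule psubset_card_mono)
  thus ?case using r2 n by (intro exI[of _ b2] exI[of _ w2] exI[of _ w2']) simp
qed

lemma fin_W: assumes a: "a \<in> A" and fin: "finite (R a)" shows "R a \<subseteq> W"
proof -
  have posW: "p \<in> W" if p: "p \<in> pos_roots (R a)" for p
  proof (rule ccontr)
    assume "p \<notin> W"
    then obtain b w w' where "reach I rho C a b w w'" and c: "Suc (card (R a)) \<le> card (Nset a b w)"
      using grow[OF a p _ fin] by blast
    have "Nset a b w \<subseteq> R a" unfolding Nset_def pos_roots_def by blast
    hence "card (Nset a b w) \<le> card (R a)" using fin by (rule card_mono[rotated])
    thus False using c by simp
  qed
  show ?thesis
  proof
    fix v assume v: "v \<in> R a"
    hence "v \<in> pos_roots (R a) \<or> v \<in> uminus ` pos_roots (R a)" using R1[OF a] by blast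
    thus "v \<in> W" using posW W_neg by blast
  qed
qed

end
theorem proposition4p6:
  fixes I I' :: "'i set" and A :: "'a set" and rho :: "'i \<Rightarrow> 'a \<Rightarrow> 'a"
    and C :: "'a \<Rightarrow> 'i \<Rightarrow> 'i \<Rightarrow> int" and R :: "'a \<Rightarrow> ('i \<Rightarrow> int) set"
  assumes cs: "cartan_scheme I A rho C"
    and conn: "connected_cs I A rho"
    and rs: "root_system I A rho C R"
    and sub: "I' \<subseteq> I" and ne1: "I' \<noteq> {}" and ne2: "I - I' \<noteq> {}"
  defines "Rhat \<equiv> (\<lambda>a. (R a \<inter> zspan I') \<union> (R a \<inter> zspan (I - I')))"
  shows "((\<exists>a\<in>A. \<forall>i\<in>I'. \<forall>j\<in>I - I'. C a i j = 0)
            \<longleftrightarrow> (\<forall>a\<in>A. \<forall>i\<in>I'. \<forall>j\<in>I - I'. C a i j = 0 \<and> C a j i = 0))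
       \<and> ((\<exists>a\<in>A. \<forall>i\<in>I'. \<forall>j\<in>I - I'. C a i j = 0)
            \<longleftrightarrow> root_system I A rho C Rhat)
       \<and> (finite_rs A R \<longrightarrow>
            ((\<exists>a\<in>A. \<forall>i\<in>I'. \<forall>j\<in>I - I'. C a i j = 0) \<longleftrightarrow> (\<forall>a\<in>A. Rhat a = R a))
          \<and> ((\<exists>a\<in>A. \<forall>i\<in>I'. \<forall>j\<in>I - I'. C a i j = 0)
               \<longleftrightarrow> (\<forall>a\<in>A. R a = (R a \<inter> zspan I') \<union> (R a \<inter> zspan (I - I')))))"
proof -
  interpret rsys I A rho C R by (rule rsys.intro[OF rs])
  let ?P1 = "\<exists>a\<in>A. \<forall>i\<in>I'. \<forall>j\<in>I - I'. C a i j = 0"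
  let ?P2 = "\<forall>a\<in>A. \<forall>i\<in>I'. \<forall>j\<in>I - I'. C a i j = 0 \<and> C a j i = 0"
  have Rh: "\<And>a. Rhat a = R a \<inter> zspan I' \<union> R a \<inter> zspan (I - I')" unfolding Rhat_def by simp
  have p12: "?P2" if p1: "?P1"
  proof (intro ballI conjI)
    obtain a0 where a0: "a0 \<in> A" and P: "\<forall>i\<in>I'. \<forall>j\<in>I - I'. C a0 i j = 0" using p1 by blast
    fix b x y assume b: "b \<in> A" and x: "x \<in> I'" and y: "y \<in> I - I'"
    obtain "is" where "is": "set is \<subseteq> I" "foldr rho is a0 = b"
      using conn a0 b unfolding connected_cs_def by blast
    have Pb: "\<forall>i\<in>I'. \<forall>j\<in>I - I'. C b i j = 0" using prop_path[OF sub a0 P "is"(1)] "is"(2) by simp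
    thus "C b x y = 0" using x y by blast
    thus "C b y x = 0" using Csym0[OF b] x y sub by blast
  qed
  have p21: "?P1" if p2: "?P2" using p2 Ane by blast
  have p23: "root_system I A rho C Rhat" if p2: "?P2"
  proof -
    interpret d: dsys I A rho C R I' by (rule dsys.intro[OF rsys.intro[OF rs] dsys_axioms.intro[OF sub p2]])
    show ?thesis using d.Rhat_rs unfolding Rhat_def .
  qed
  have p31: "?P1" if r: "root_system I A rho C Rhat"
  proof -
    interpret h: rsys I A rho C Rhat by (rule rsys.intro[OF r])
    obtain a0 where a0: "a0 \<in> A" using Ane by blast
    have W: "\<forall>a\<in>A. Rhat a \<subseteq> zspan I' \<union> zspan (I - I')" using Rh by blast
    have "\<forall>x\<in>I'. \<forall>y\<in>I - I'. C a0 x y = 0" using h.noW[OF sub W a0] by blast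
    thus ?thesis using a0 by blast
  qed
  have p14: "\<forall>a\<in>A. R a \<subseteq> zspan I' \<union> zspan (I - I')" if p1: "?P1" and fin: "finite_rs A R"
  proof -
    interpret d: dsys I A rho C R I' by (rule dsys.intro[OF rsys.intro[OF rs] dsys_axioms.intro[OF sub p12[OF p1]]])
    show ?thesis using d.fin_W fin unfolding finite_rs_def d.W_def by blast
  qed
  have p41: "?P1" if W: "\<forall>a\<in>A. R a \<subseteq> zspan I' \<union> zspan (I - I')"
  proof -
    obtain a0 where a0: "a0 \<in> A" using Ane by blast
    have "\<forall>x\<in>I'. \<forall>y\<in>I - I'. C a0 x y = 0" using noW[OF sub W a0] by blast
    thus ?thesis using a0 by blast
  qed
  have e1: "(\<forall>a\<in>A. Rhat a = R a) \<longleftrightarrow> (\<forall>a\<in>A. R a \<subseteq> zspan I' \<union> zspan (I - I'))"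
    using Rh by blast
  have e2: "(\<forall>a\<in>A. R a = (R a \<inter> zspan I') \<union> (R a \<inter> zspan (I - I'))) \<longleftrightarrow> (\<forall>a\<in>A. R a \<subseteq> zspan I' \<union> zspan (I - I'))"
    by blast
  show ?thesis
    unfolding e1 e2 using p12 p21 p23 p31 p14 p41 by blast
qed

end
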